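(* Let $\mathcal{H}$ be a collection of nonempty loopless graphs, each having an even number of edges. Then for every $\varepsilon>0$ there exists a positive integer $n_0=n_0(\varepsilon,\mathcal{H})$ such that for every $n\geq n_0$, if $\mathcal{G}\subseteq\mathbb{F}_2^{\binom{[n]}{2}}$ is an $\mathcal{H}$-code with $\mathbb{P}[\mathcal{G}]=\delta_n(\mathcal{H})$, then $$\big\|\mathbb{1}_{\mathcal{G}}-\mathbb{P}[\mathcal{G}]\big\|_{U_2}\leq\varepsilon.$$
   Context: Graphs: for a nonempty finite set $V$, $\binom{V}{\leq 2}$ denotes the set of nonempty subsets of $V$ with at most two elements and $\binom{V}{2}$ the set of $2$-element subsets. A graph on $V$ is a subset of $\binom{V}{\leq 2}$; its elements of size $2$ are edges and of size $1$ self-loops; it is loopless if it has no self-loops. The spanning vertex set $V(G)$ is the union of the members of $G$. Graphs $G,H$ are isomorphic if there is a bijection $\phi\colon V(G)\to V(H)$ with $\{x,y\}\in G\iff\{\phi(x),\phi(y)\}\in H$ for all $x,y\in V(G)$. For graphs on the same vertex set, $G_1+G_2$ denotes symmetric difference. Loopless graphs on $[n]$ are identified with elements of $\mathbb{F}_2^{\binom{[n]}{2}}$ via indicators; $\mathbb{P}$ is the uniform probability measure on $\mathbb{F}_2^{\binom{[n]}{2}}$ and $\mathbb{E}$ the corresponding expectation. An $\mathcal{H}$-code is a family $\mathcal{G}$ of graphs on a common vertex set such that for all $G_1,G_2\in\mathcal{G}$, $G_1+G_2$ is not isomorphic to any graph of $\mathcal{H}$. $\delta_n(\mathcal{H})$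 is the maximum of $\mathbb{P}[\mathcal{G}]$ over all $\mathcal{H}$-codes $\mathcal{G}\subseteq\mathbb{F}_2^{\binom{[n]}{2}}$. Gowers norm: for a nonempty finite set $\mathcal{I}$, $d\geq 2$ and $f\colon\mathbb{F}_2^{\mathcal{I}}\to\mathbb{C}$, $\|f\|_{U_d}=\Big|\mathbb{E}_{x,y_1,\dots,y_d\in\mathbb{F}_2^{\mathcal{I}}}\prod_{s\subseteq[d]}\mathcal{C}^{|s|}f\big(x+\sum_{i\in s}y_i\big)\Big|^{1/2^d}$, where $\mathcal{C}$ is complex conjugation. *)

theory Defs
  imports "HOL-Analysis.Analysis"
begin

text \<open>The 2-element subsets of [n] = {1..n}; loopless graphs on [n] are subsets of this set,
  i.e. elements of F_2^(binom [n] 2) via indicators.\<close>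
definition pairs_n :: "nat \<Rightarrow> nat set set" where
  "pairs_n n = {e. e \<subseteq> {1..n} \<and> card e = 2}"

definition spanV :: "'a set set \<Rightarrow> 'a set" where
  "spanV G = \<Union> G"

definition graph_iso :: "'a set set \<Rightarrow> 'b set set \<Rightarrow> bool" where
  "graph_iso G H \<longleftrightarrow> (\<exists>\<phi>. bij_betw \<phi> (spanV G) (spanV H) \<and>
      (\<forall>x\<in>spanV G. \<forall>y\<in>spanV G. {x, y} \<in> G \<longleftrightarrow> {\<phi> x, \<phi> y} \<in> H))"

definition nonempty_loopless_even :: "'a set set \<Rightarrow> bool" where
  "nonempty_loopless_even K \<longleftrightarrow> finite (spanV K) \<and> K \<noteq> {} \<and>
      (\<forall>e\<in>K. card e = 2) \<and> even (card K)"

text \<open>An H-code in F_2^(binom [n] 2): symmetric difference is graph addition.\<close>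
definition H_code :: "'a set set set \<Rightarrow> nat \<Rightarrow> nat set set set \<Rightarrow> bool" where
  "H_code \<H> n \<G> \<longleftrightarrow> \<G> \<subseteq> Pow (pairs_n n) \<and>
     (\<forall>G1\<in>\<G>. \<forall>G2\<in>\<G>. \<not> (\<exists>K\<in>\<H>. graph_iso (G1 - G2 \<union> (G2 - G1)) K))"

definition Pn :: "nat \<Rightarrow> nat set set set \<Rightarrow> real" where
  "Pn n \<G> = real (card (\<G> \<inter> Pow (pairs_n n))) / 2 ^ card (pairs_n n)"

definition delta_n :: "nat \<Rightarrow> 'a set set set \<Rightarrow> real" where
  "delta_n n \<H> = Max {Pn n \<G> | \<G>. H_code \<H> n \<G>}"

text \<open>Elements of F_2^I are subsets of I; addition is symmetric difference.
  The sum of ys i over i in s:\<close>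
definition xor_sum :: "nat set \<Rightarrow> (nat \<Rightarrow> 'i set) \<Rightarrow> 'i set" where
  "xor_sum s ys = {v. odd (card {i\<in>s. v \<in> ys i})}"

definition symdiff :: "'i set \<Rightarrow> 'i set \<Rightarrow> 'i set" where
  "symdiff A B = (A - B) \<union> (B - A)"

definition gowers_norm :: "'i set \<Rightarrow> nat \<Rightarrow> ('i set \<Rightarrow> complex) \<Rightarrow> real" where
  "gowers_norm I d f =
     cmod ((\<Sum>x\<in>Pow I. \<Sum>ys\<in>PiE {1..d} (\<lambda>_. Pow I).
        \<Prod>s\<in>Pow {1..d}. (let z = symdiff x (xor_sum s ys) in
                           if even (card s) then f z else cnj (f z)))
       / of_nat (card (Pow I) ^ (d + 1))) powr (1 / 2 ^ d)"

end

theory Submission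
  imports Defs "HOL-Library.Ramsey"
begin


definition chi :: "'e set \<Rightarrow> 'e set \<Rightarrow> real" where
  "chi R x = (-1) ^ card (R \<inter> x)"

lemma chi_prod: "finite R \<Longrightarrow> chi R x = (\<Prod>e\<in>R. if e \<in> x then -1 else 1)"
  by (simp add: chi_def prod.If_cases Int_def)

lemma chi_symdiff: "finite R \<Longrightarrow> chi R (symdiff x y) = chi R x * chi R y"
  by (simp add: chi_prod prod.distrib[symmetric] symdiff_def, rule prod.cong, auto)

lemma symdiff_invol[simp]: "symdiff (symdiff a b) b = a"
  by (auto simp: symdiff_def)

lemma swap4: "(\<Sum>x\<in>A. \<Sum>a\<in>A. \<Sum>b\<in>A. \<Sum>R\<in>A. g x a b R) = (\<Sum>R\<in>A. \<Sum>x\<in>A. \<Sum>a\<in>A. \<Sum>b\<in>A. g x a b R)"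
proof -
  have "(\<Sum>x\<in>A. \<Sum>a\<in>A. \<Sum>b\<in>A. \<Sum>R\<in>A. g x a b R) = (\<Sum>x\<in>A. \<Sum>a\<in>A. \<Sum>R\<in>A. \<Sum>b\<in>A. g x a b R)"
    by (rule sum.cong[OF refl], rule sum.cong[OF refl], rule sum.swap)
  also have "\<dots> = (\<Sum>x\<in>A. \<Sum>R\<in>A. \<Sum>a\<in>A. \<Sum>b\<in>A. g x a b R)"
    by (rule sum.cong[OF refl], rule sum.swap)
  also have "\<dots> = (\<Sum>R\<in>A. \<Sum>x\<in>A. \<Sum>a\<in>A. \<Sum>b\<in>A. g x a b R)"
    by (rule sum.swap)
  finally show ?thesis .
qed

lemma chi_comm: "chi R x = chi x R"
  by (simp add: chi_def Int_commute)

lemma chi_empty[simp]: "chi {} x = 1" "chi x {} = 1"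
  by (auto simp: chi_def)

lemma chi_flip:
  assumes "finite z" "e \<in> z"
  shows "chi (symdiff R {e}) z = - chi R z"
proof -
  have "chi (symdiff R {e}) z = chi z (symdiff R {e})" by (rule chi_comm)
  also have "\<dots> = chi z R * chi z {e}" using assms by (simp add: chi_symdiff)
  also have "chi z {e} = -1" using assms by (simp add: chi_def)
  finally show ?thesis by (simp add: chi_comm)
qed

lemma orth0:
  assumes "finite E" "finite z" "e \<in> E" "e \<in> z"
  shows "(\<Sum>R\<in>Pow E. chi R z) = 0"
proof -
  have "(\<Sum>R\<in>Pow E. chi R z) = (\<Sum>R\<in>Pow E. chi (symdiff R {e}) z)"
    apply (rule sum.reindex_bij_witness[of _ "\<lambda>R. symdiff R {e}" "\<lambda>R. symdiff R {e}"])
    apply simp_all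
    using assms by (auto simp: symdiff_def)
  also have "\<dots> = - (\<Sum>R\<in>Pow E. chi R z)"
    using assms by (simp add: chi_flip sum_negf)
  finally show ?thesis by simp
qed

lemma orth_full:
  assumes "finite E" "z \<subseteq> E"
  shows "(\<Sum>R\<in>Pow E. chi R z) = (if z = {} then 2 ^ card E else 0)"
proof (cases "z = {}")
  case True then show ?thesis using assms by (simp add: card_Pow)
next
  case False
  then obtain e where "e \<in> z" by auto
  then show ?thesis using orth0[of E z e] assms False finite_subset by auto
qed

definition fh :: "'e set \<Rightarrow> ('e set \<Rightarrow> real) \<Rightarrow> 'e set \<Rightarrow> real" where
  "fh E f R = (\<Sum>y\<in>Pow E. f y * chi R y)"

lemma inversion:
  assumes "finite E" "x \<subseteq> E"
  shows "(\<Sum>R\<in>Pow E. fh E f R * chi R x) = 2 ^ card E * f x"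
proof -
  have "(\<Sum>R\<in>Pow E. fh E f R * chi R x) = (\<Sum>R\<in>Pow E. \<Sum>y\<in>Pow E. f y * (chi R y * chi R x))"
    by (simp add: fh_def sum_distrib_right mult.assoc)
  also have "\<dots> = (\<Sum>y\<in>Pow E. \<Sum>R\<in>Pow E. f y * chi R (symdiff y x))"
  proof (subst sum.swap, intro sum.cong refl)
    fix y R assume "y \<in> Pow E" "R \<in> Pow E"
    then have "finite R" using assms finite_subset by auto
    then have "chi R y * chi R x = chi R (symdiff y x)" by (simp add: chi_symdiff)
    then show "f y * (chi R y * chi R x) = f y * chi R (symdiff y x)" by simp
  qed
  also have "\<dots> = (\<Sum>y\<in>Pow E. f y * (if symdiff y x = {} then 2 ^ card E else 0))"
    apply (rule sum.cong, simp)
    apply (subst sum_distrib_left[symmetric])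
    apply (subst orth_full)
    using assms by (auto simp: symdiff_def)
  also have "\<dots> = (\<Sum>y\<in>Pow E. if y = x then f y * 2 ^ card E else 0)"
    by (rule sum.cong, auto simp: symdiff_def)
  also have "\<dots> = 2 ^ card E * f x" using assms by simp
  finally show ?thesis .
qed

lemma parseval:
  assumes "finite E"
  shows "(\<Sum>R\<in>Pow E. (fh E f R)^2) = 2 ^ card E * (\<Sum>y\<in>Pow E. (f y)^2)"
proof -
  have "(\<Sum>R\<in>Pow E. (fh E f R)^2) = (\<Sum>R\<in>Pow E. \<Sum>y\<in>Pow E. fh E f R * (f y * chi R y))"
    by (simp add: power2_eq_square fh_def[of E f] sum_distrib_left)
  also have "\<dots> = (\<Sum>y\<in>Pow E. f y * (\<Sum>R\<in>Pow E. fh E f R * chi R y))"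
    by (subst sum.swap, simp add: sum_distrib_left algebra_simps)
  also have "\<dots> = (\<Sum>y\<in>Pow E. f y * (2 ^ card E * f y))"
    using assms by (simp add: inversion)
  finally show ?thesis by (simp add: sum_distrib_left power2_eq_square algebra_simps)
qed

lemma u2_fourier:
  assumes "finite E"
  shows "(\<Sum>x\<in>Pow E. \<Sum>a\<in>Pow E. \<Sum>b\<in>Pow E. f x * f a * f b * f (symdiff (symdiff a b) x))
     = (\<Sum>R\<in>Pow E. (fh E f R)^4) / 2 ^ card E"
proof -
  let ?N = "(2::real) ^ card E"
  have fin: "\<And>R. R \<in> Pow E \<Longrightarrow> finite R" using assms finite_subset by blast
  have sd: "symdiff (symdiff a b) x \<in> Pow E" if "a \<in> Pow E" "b \<in> Pow E" "x \<in> Pow E" for a b x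
    using that by (auto simp: symdiff_def)
  have "(\<Sum>R\<in>Pow E. (fh E f R)^4) = (\<Sum>R\<in>Pow E. fh E f R * (fh E f R * fh E f R * fh E f R))"
    by (simp add: power4_eq_xxxx mult.assoc)
  also have "\<dots> = (\<Sum>R\<in>Pow E. \<Sum>x\<in>Pow E. \<Sum>a\<in>Pow E. \<Sum>b\<in>Pow E.
          f x * f a * f b * (fh E f R * chi R (symdiff (symdiff a b) x)))"
    apply (rule sum.cong, simp)
    apply (simp add: fh_def sum_distrib_left sum_distrib_right chi_symdiff fin)
    apply (rule sum.cong, simp)+
    by (simp add: algebra_simps)
  also have "\<dots> = (\<Sum>x\<in>Pow E. \<Sum>a\<in>Pow E. \<Sum>b\<in>Pow E. \<Sum>R\<in>Pow E.
          f x * f a * f b * (fh E f R * chi R (symdiff (symdiff a b) x)))"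
    by (rule swap4[symmetric])
  also have "\<dots> = (\<Sum>x\<in>Pow E. \<Sum>a\<in>Pow E. \<Sum>b\<in>Pow E.
          f x * f a * f b * (?N * f (symdiff (symdiff a b) x)))"
    apply (rule sum.cong, simp)+
    apply (subst sum_distrib_left[symmetric])
    apply (subst inversion)
    using assms sd by auto
  also have "\<dots> = ?N * (\<Sum>x\<in>Pow E. \<Sum>a\<in>Pow E. \<Sum>b\<in>Pow E. f x * f a * f b * f (symdiff (symdiff a b) x))"
    by (simp add: sum_distrib_left mult.commute mult.left_commute)
  finally show ?thesis by simp
qed



lemma symdiff_invol2[simp]: "symdiff x (symdiff x a) = a" and symdiff_empty[simp]: "symdiff x {} = x"
  by (auto simp: symdiff_def)

lemma xor_sum_simps:
  "xor_sum {} ys = {}" "xor_sum {1} ys = ys 1" "xor_sum {2} ys = ys 2"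
  "xor_sum {1,2} ys = symdiff (ys 1) (ys 2)"
proof -
  show "xor_sum {} ys = {}" by (simp add: xor_sum_def)
  have "{i \<in> {1::nat}. v \<in> ys i} = (if v \<in> ys 1 then {1} else {})" for v by auto
  then show "xor_sum {1} ys = ys 1" by (simp add: xor_sum_def)
  have "{i \<in> {2::nat}. v \<in> ys i} = (if v \<in> ys 2 then {2} else {})" for v by auto
  then show "xor_sum {2} ys = ys 2" by (simp add: xor_sum_def)
  have "{i \<in> {1,2::nat}. v \<in> ys i} = (if v \<in> ys 1 then {1} else {}) \<union> (if v \<in> ys 2 then {2} else {})" for v
    by auto
  then show "xor_sum {1,2} ys = symdiff (ys 1) (ys 2)"
    by (auto simp: xor_sum_def symdiff_def)
qed

lemma Pow12: "Pow {1..2::nat} = {{},{1},{2},{1,2}}"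
proof -
  have "{1..2::nat} = {1,2}" by auto
  then show ?thesis by (simp add: Pow_insert insert_commute)
qed

lemma sum_PiE2:
  "(\<Sum>ys\<in>PiE {1..2::nat} (\<lambda>_. A). h (ys 1) (ys 2)) = (\<Sum>a\<in>A. \<Sum>b\<in>A. h a b)"
proof -
  have "(\<Sum>ys\<in>PiE {1..2::nat} (\<lambda>_. A). h (ys 1) (ys 2)) = (\<Sum>p\<in>A \<times> A. h (fst p) (snd p))"
  proof (rule sum.reindex_bij_witness[of _ "\<lambda>p (k::nat). if k = 1 then fst p else if k = 2 then snd p else undefined"
        "\<lambda>ys. (ys 1, ys 2)"])
    fix ys assume ys: "ys \<in> PiE {1..2::nat} (\<lambda>_. A)"
    show "(\<lambda>k. if k = 1 then fst (ys 1, ys 2) else if k = 2 then snd (ys 1, ys 2) else undefined) = ys"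
    proof
      fix k show "(if k = 1 then fst (ys 1, ys 2) else if k = 2 then snd (ys 1, ys 2) else undefined) = ys k"
        using ys by (auto simp: PiE_def extensional_def)
    qed
    show "(ys 1, ys 2) \<in> A \<times> A" using ys by auto
    show "h (fst (ys 1, ys 2)) (snd (ys 1, ys 2)) = h (ys 1) (ys 2)" by simp
  next
    fix p assume "p \<in> A \<times> A"
    then show "(\<lambda>k. if k = 1 then fst p else if k = 2 then snd p else undefined) \<in> PiE {1..2::nat} (\<lambda>_. A)"
      by (auto simp: PiE_def extensional_def)
    show "((\<lambda>k::nat. if k = 1 then fst p else if k = 2 then snd p else undefined) 1,
          (\<lambda>k::nat. if k = 1 then fst p else if k = 2 then snd p else undefined) 2) = p" by simp
  qed
  also have "\<dots> = (\<Sum>a\<in>A. \<Sum>b\<in>A. h a b)"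
    by (simp add: sum.cartesian_product case_prod_beta)
  finally show ?thesis .
qed

lemma sum_shift:
  assumes "x \<subseteq> I"
  shows "(\<Sum>a\<in>Pow I. h a) = (\<Sum>a\<in>Pow I. h (symdiff x a))"
  apply (rule sum.reindex_bij_witness[of _ "symdiff x" "symdiff x"])
  apply simp_all
  using assms by (auto simp: symdiff_def)

lemma gowers_raw:
  fixes g :: "'i set \<Rightarrow> real"
  assumes "finite I"
  shows "(\<Sum>x\<in>Pow I. \<Sum>ys\<in>PiE {1..2} (\<lambda>_. Pow I).
        \<Prod>s\<in>Pow {1..2}. (let z = symdiff x (xor_sum s ys) in
                           if even (card s) then complex_of_real (g z) else cnj (complex_of_real (g z))))
     = complex_of_real ((\<Sum>R\<in>Pow I. (fh I g R)^4) / 2 ^ card I)"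
proof -
  have e1: "(\<Prod>s\<in>Pow {1..2}. (let z = symdiff x (xor_sum s ys) in
                           if even (card s) then complex_of_real (g z) else cnj (complex_of_real (g z))))
      = complex_of_real (g x * g (symdiff x (ys 1)) * g (symdiff x (ys 2)) * g (symdiff x (symdiff (ys 1) (ys 2))))"
    for x and ys :: "nat \<Rightarrow> 'i set"
    unfolding Pow12 by (simp add: xor_sum_simps xor_sum_simps[simplified] Let_def)
  have "(\<Sum>x\<in>Pow I. \<Sum>ys\<in>PiE {1..2} (\<lambda>_. Pow I).
        \<Prod>s\<in>Pow {1..2}. (let z = symdiff x (xor_sum s ys) in
                           if even (card s) then complex_of_real (g z) else cnj (complex_of_real (g z))))
     = complex_of_real (\<Sum>x\<in>Pow I. \<Sum>a\<in>Pow I. \<Sum>b\<in>Pow I. g x * g (symdiff x a) * g (symdiff x b) * g (symdiff x (symdiff a b)))"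
  proof -
    have "\<And>x. x \<in> Pow I \<Longrightarrow> (\<Sum>ys\<in>PiE {1..2::nat} (\<lambda>_. Pow I).
        \<Prod>s\<in>Pow {1..2}. (let z = symdiff x (xor_sum s ys) in
                           if even (card s) then complex_of_real (g z) else cnj (complex_of_real (g z))))
       = (\<Sum>ys\<in>PiE {1..2::nat} (\<lambda>_. Pow I). complex_of_real (g x * g (symdiff x (ys 1)) * g (symdiff x (ys 2)) * g (symdiff x (symdiff (ys 1) (ys 2)))))"
      by (rule sum.cong[OF refl], rule e1)
    also have "\<And>x. (\<Sum>ys\<in>PiE {1..2::nat} (\<lambda>_. Pow I). complex_of_real (g x * g (symdiff x (ys 1)) * g (symdiff x (ys 2)) * g (symdiff x (symdiff (ys 1) (ys 2)))))
       = (\<Sum>a\<in>Pow I. \<Sum>b\<in>Pow I. complex_of_real (g x * g (symdiff x a) * g (symdiff x b) * g (symdiff x (symdiff a b))))"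
      by (rule sum_PiE2)
    finally have "\<And>x. x \<in> Pow I \<Longrightarrow> (\<Sum>ys\<in>PiE {1..2::nat} (\<lambda>_. Pow I).
        \<Prod>s\<in>Pow {1..2}. (let z = symdiff x (xor_sum s ys) in
                           if even (card s) then complex_of_real (g z) else cnj (complex_of_real (g z))))
       = (\<Sum>a\<in>Pow I. \<Sum>b\<in>Pow I. complex_of_real (g x * g (symdiff x a) * g (symdiff x b) * g (symdiff x (symdiff a b))))" .
    then show ?thesis by (simp only: of_real_sum cong: sum.cong)
  qed
  also have "(\<Sum>x\<in>Pow I. \<Sum>a\<in>Pow I. \<Sum>b\<in>Pow I. g x * g (symdiff x a) * g (symdiff x b) * g (symdiff x (symdiff a b)))
      = (\<Sum>x\<in>Pow I. \<Sum>a\<in>Pow I. \<Sum>b\<in>Pow I. g x * g a * g b * g (symdiff (symdiff a b) x))"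
  proof (rule sum.cong[OF refl])
    fix x assume x: "x \<in> Pow I"
    then have xI: "x \<subseteq> I" by simp
    have "(\<Sum>a\<in>Pow I. \<Sum>b\<in>Pow I. g x * g a * g b * g (symdiff (symdiff a b) x))
       = (\<Sum>a\<in>Pow I. \<Sum>b\<in>Pow I. g x * g (symdiff x a) * g b * g (symdiff (symdiff (symdiff x a) b) x))"
      by (rule sum_shift[OF xI])
    also have "\<dots> = (\<Sum>a\<in>Pow I. \<Sum>b\<in>Pow I. g x * g (symdiff x a) * g (symdiff x b) * g (symdiff (symdiff (symdiff x a) (symdiff x b)) x))"
      by (rule sum.cong[OF refl], rule sum_shift[OF xI])
    also have "\<dots> = (\<Sum>a\<in>Pow I. \<Sum>b\<in>Pow I. g x * g (symdiff x a) * g (symdiff x b) * g (symdiff x (symdiff a b)))"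
    proof -
      have "symdiff (symdiff (symdiff x a) (symdiff x b)) x = symdiff x (symdiff a b)" for a b
        by (auto simp: symdiff_def)
      then show ?thesis by simp
    qed
    finally show "(\<Sum>a\<in>Pow I. \<Sum>b\<in>Pow I. g x * g (symdiff x a) * g (symdiff x b) * g (symdiff x (symdiff a b)))
      = (\<Sum>a\<in>Pow I. \<Sum>b\<in>Pow I. g x * g a * g b * g (symdiff (symdiff a b) x))" by simp
  qed
  also have "\<dots> = (\<Sum>R\<in>Pow I. (fh I g R)^4) / 2 ^ card I"
    using assms by (rule u2_fourier)
  finally show ?thesis .
qed

lemma gowers_eq:
  fixes g :: "'i set \<Rightarrow> real"
  assumes "finite I"
  shows "gowers_norm I 2 (\<lambda>G. complex_of_real (g G))
     = (\<bar>\<Sum>R\<in>Pow I. (fh I g R)^4\<bar> / (2 ^ card I) ^ 4) powr (1/4)"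
proof -
  have "gowers_norm I 2 (\<lambda>G. complex_of_real (g G)) =
     cmod (complex_of_real ((\<Sum>R\<in>Pow I. (fh I g R)^4) / 2 ^ card I) / of_nat (card (Pow I) ^ 3)) powr (1/4)"
  proof -
    have h1: "(2::nat) + 1 = 3" by simp
    have h2: "(1::real) / 2 ^ 2 = 1 / 4" by simp
    show ?thesis unfolding gowers_norm_def h1 h2
      by (subst gowers_raw[OF assms]) (rule refl)
  qed
  also have "\<dots> = (\<bar>\<Sum>R\<in>Pow I. (fh I g R)^4\<bar> / (2 ^ card I) ^ 4) powr (1/4)"
  proof -
    have "complex_of_real ((\<Sum>R\<in>Pow I. (fh I g R)^4) / 2 ^ card I) / of_nat (card (Pow I) ^ 3)
        = complex_of_real ((\<Sum>R\<in>Pow I. (fh I g R)^4) / (2 ^ card I) ^ 4)"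
    proof -
      have "(\<Sum>R\<in>Pow I. (fh I g R)^4) / 2 ^ card I / real (card (Pow I) ^ 3) = (\<Sum>R\<in>Pow I. (fh I g R)^4) / (2 ^ card I) ^ 4"
        using assms by (simp add: card_Pow power_mult_distrib field_simps power4_eq_xxxx power3_eq_cube)
      then have "complex_of_real ((\<Sum>R\<in>Pow I. (fh I g R)^4) / 2 ^ card I / real (card (Pow I) ^ 3)) = complex_of_real ((\<Sum>R\<in>Pow I. (fh I g R)^4) / (2 ^ card I) ^ 4)"
        by (rule arg_cong)
      moreover have "complex_of_real (X / real n) = complex_of_real X / of_nat n" for X n
        by (simp add: of_real_divide)
      ultimately show ?thesis by simp
    qed
    then show ?thesis by (simp only: norm_of_real) simp
  qed
  finally show ?thesis .
qed



definition pairs :: "nat set \<Rightarrow> nat set set" where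
  "pairs S = {e. e \<subseteq> S \<and> card e = 2}"

lemma pairs_n_eq: "pairs_n n = pairs {1..n}"
  by (simp add: pairs_n_def pairs_def)

lemma pairs_nsets: "pairs S = nsets S 2"
  by (auto simp: pairs_def nsets_def intro: card_ge_0_finite)

lemma card_pairs: "card (pairs S) = card S choose 2"
  by (simp add: pairs_nsets)

lemma finite_pairs: "finite S \<Longrightarrow> finite (pairs S)"
  by (simp add: pairs_nsets finite_imp_finite_nsets)

lemma finite_pairs_n[simp]: "finite (pairs_n n)"
  by (simp add: pairs_n_eq finite_pairs)

lemma pairs_mono: "S \<subseteq> T \<Longrightarrow> pairs S \<subseteq> pairs T"
  by (auto simp: pairs_def)

lemma symdiff_alt: "G1 - G2 \<union> (G2 - G1) = symdiff G1 G2"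
  by (simp add: symdiff_def)

definition code_on :: "'a set set set \<Rightarrow> nat set set set \<Rightarrow> bool" where
  "code_on \<H> \<G> \<longleftrightarrow> (\<forall>G1\<in>\<G>. \<forall>G2\<in>\<G>. \<not> (\<exists>K\<in>\<H>. graph_iso (symdiff G1 G2) K))"

lemma H_code_alt: "H_code \<H> n \<G> \<longleftrightarrow> \<G> \<subseteq> Pow (pairs_n n) \<and> code_on \<H> \<G>"
  by (simp add: H_code_def code_on_def symdiff_alt)

lemma Pn_code: "\<G> \<subseteq> Pow (pairs_n n) \<Longrightarrow> Pn n \<G> = real (card \<G>) / 2 ^ card (pairs_n n)"
  by (simp add: Pn_def Int_absorb2)

lemma finite_code_vals: "finite {Pn n \<G> | \<G>. H_code \<H> n \<G>}"
proof -
  have "{Pn n \<G> | \<G>. H_code \<H> n \<G>} \<subseteq> (Pn n) ` Pow (Pow (pairs_n n))"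
    by (auto simp: H_code_def)
  then show ?thesis by (rule finite_subset) simp
qed

lemma empty_code: "H_code \<H> n {}"
  by (simp add: H_code_def)

lemma code_le_delta: "H_code \<H> n \<G> \<Longrightarrow> Pn n \<G> \<le> delta_n n \<H>"
  unfolding delta_n_def by (rule Max_ge[OF finite_code_vals]) blast

lemma delta_nonneg: "0 \<le> delta_n n \<H>"
proof -
  have "Pn n {} \<le> delta_n n \<H>" by (rule code_le_delta[OF empty_code])
  then show ?thesis by (simp add: Pn_def)
qed

lemma card_code_le:
  assumes "H_code \<H> n \<G>"
  shows "real (card \<G>) \<le> delta_n n \<H> * 2 ^ card (pairs_n n)"
proof -
  have "real (card \<G>) / 2 ^ card (pairs_n n) \<le> delta_n n \<H>"
    using code_le_delta[OF assms] Pn_code assms by (simp add: H_code_def)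
  then show ?thesis by (simp add: divide_le_eq)
qed

lemma iso_card:
  assumes iso: "graph_iso X K" and X2: "\<forall>e\<in>X. card e = 2" and K2: "\<forall>e\<in>K. card e = 2"
  shows "card X = card K"
proof -
  obtain \<phi> where bij: "bij_betw \<phi> (spanV X) (spanV K)"
    and ed: "\<forall>x\<in>spanV X. \<forall>y\<in>spanV X. {x, y} \<in> X \<longleftrightarrow> {\<phi> x, \<phi> y} \<in> K"
    using iso by (auto simp: graph_iso_def)
  have inj: "inj_on \<phi> (spanV X)" using bij by (simp add: bij_betw_def)
  have "inj_on (image \<phi>) X"
    by (rule inj_on_subset[OF inj_on_image_Pow[OF inj]]) (auto simp: spanV_def)
  moreover have "image \<phi> ` X = K"
  proof
    show "image \<phi> ` X \<subseteq> K"
    proof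
      fix k assume "k \<in> image \<phi> ` X"
      then obtain e where e: "e \<in> X" "k = \<phi> ` e" by auto
      then obtain x y where xy: "e = {x, y}" using X2 card_2_iff by metis
      then have "x \<in> spanV X" "y \<in> spanV X" using e by (auto simp: spanV_def)
      then show "k \<in> K" using ed e xy by auto
    qed
  next
    show "K \<subseteq> image \<phi> ` X"
    proof
      fix k assume k: "k \<in> K"
      then obtain a b where ab: "k = {a, b}" using K2 card_2_iff by metis
      then have "a \<in> spanV K" "b \<in> spanV K" using k by (auto simp: spanV_def)
      then obtain x y where xy: "x \<in> spanV X" "y \<in> spanV X" "a = \<phi> x" "b = \<phi> y"
        using bij by (metis bij_betw_imp_surj_on imageE)
      then have "{x, y} \<in> X" using ed k ab by auto
      moreover have "\<phi> ` {x, y} = k" using xy ab by auto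
      ultimately show "k \<in> image \<phi> ` X" by blast
    qed
  qed
  ultimately show ?thesis by (metis card_image)
qed

lemma relabel_iso:
  assumes inj: "inj_on \<sigma> S" and XS: "X \<subseteq> Pow S"
    and iso: "graph_iso ((\<lambda>e. \<sigma> ` e) ` X) K"
  shows "graph_iso X K"
proof -
  let ?Y = "(\<lambda>e. \<sigma> ` e) ` X"
  obtain \<psi> where bij: "bij_betw \<psi> (spanV ?Y) (spanV K)"
    and ed: "\<forall>x\<in>spanV ?Y. \<forall>y\<in>spanV ?Y. {x, y} \<in> ?Y \<longleftrightarrow> {\<psi> x, \<psi> y} \<in> K"
    using iso by (auto simp: graph_iso_def)
  have sp: "spanV ?Y = \<sigma> ` spanV X" by (auto simp: spanV_def)
  have sub: "spanV X \<subseteq> S" using XS by (auto simp: spanV_def)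
  have b1: "bij_betw \<sigma> (spanV X) (spanV ?Y)"
    unfolding sp by (rule bij_betw_imageI[OF inj_on_subset[OF inj sub]]) simp
  have "bij_betw (\<psi> \<circ> \<sigma>) (spanV X) (spanV K)" by (rule bij_betw_trans[OF b1 bij])
  moreover have "\<forall>x\<in>spanV X. \<forall>y\<in>spanV X. {x, y} \<in> X \<longleftrightarrow> {(\<psi> \<circ> \<sigma>) x, (\<psi> \<circ> \<sigma>) y} \<in> K"
  proof (intro ballI)
    fix x y assume x: "x \<in> spanV X" and y: "y \<in> spanV X"
    have "{x, y} \<in> X \<longleftrightarrow> {\<sigma> x, \<sigma> y} \<in> ?Y"
    proof
      assume "{x, y} \<in> X" then show "{\<sigma> x, \<sigma> y} \<in> ?Y" using imageI[of "{x,y}" X "\<lambda>e. \<sigma> ` e"] by simp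
    next
      assume "{\<sigma> x, \<sigma> y} \<in> ?Y"
      then obtain e where e: "e \<in> X" "\<sigma> ` {x, y} = \<sigma> ` e" by auto
      have "{x, y} \<subseteq> S" "e \<subseteq> S" using x y sub e XS by auto
      then have "{x, y} = e" using e inj_on_image_eq_iff[OF inj] by blast
      then show "{x, y} \<in> X" using e by simp
    qed
    also have "\<dots> \<longleftrightarrow> {\<psi> (\<sigma> x), \<psi> (\<sigma> y)} \<in> K"
    proof -
      have "\<sigma> x \<in> spanV ?Y" "\<sigma> y \<in> spanV ?Y" using sp x y by auto
      then show ?thesis using ed by blast
    qed
    finally show "{x, y} \<in> X \<longleftrightarrow> {(\<psi> \<circ> \<sigma>) x, (\<psi> \<circ> \<sigma>) y} \<in> K" by simp
  qed
  ultimately show ?thesis by (auto simp: graph_iso_def)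
qed

lemma chi_self: "finite A \<Longrightarrow> X \<subseteq> A \<Longrightarrow> chi A X = (-1) ^ card X"
  by (simp add: chi_def Int_absorb1)

lemma even_card_symdiff:
  assumes "finite A" "finite B"
  shows "even (card (symdiff A B)) \<longleftrightarrow> (even (card A) \<longleftrightarrow> even (card B))"
proof -
  have f: "finite (A \<union> B)" using assms by simp
  have "chi (A \<union> B) (symdiff A B) = chi (A \<union> B) A * chi (A \<union> B) B"
    by (rule chi_symdiff[OF f])
  then have "(-1::real) ^ card (symdiff A B) = (-1) ^ card A * (-1) ^ card B"
  proof -
    have s: "symdiff A B \<subseteq> A \<union> B" by (auto simp: symdiff_def)
    show ?thesis using \<open>chi (A \<union> B) (symdiff A B) = _\<close> chi_self[OF f s] chi_self[OF f, of A] chi_self[OF f, of B] by simp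
  qed
  then show ?thesis
    by (cases "even (card A)"; cases "even (card B)"; cases "even (card (symdiff A B))") auto
qed



lemma chi_pm: "chi R z = 1 \<or> chi R z = -1"
  by (simp add: chi_def minus_one_power_iff)

lemma chi_bnd: "0 \<le> 1 + chi R z" "0 \<le> 1 - chi R z" "chi R z \<le> 1" "-1 \<le> chi R z"
  using chi_pm[of R z] by auto

lemma fiber_card:
  assumes code: "H_code \<H> n \<G>" and S: "S \<subseteq> {1..n}" "card S = m"
  shows "real (card {y\<in>\<G>. y \<inter> (pairs_n n - pairs S) = z}) \<le> delta_n m \<H> * 2 ^ card (pairs S)"
proof -
  define A where "A = pairs S"
  define Z where "Z = pairs_n n - pairs S"
  define F where "F = {y\<in>\<G>. y \<inter> Z = z}"
  have finS: "finite S" using S finite_subset by blast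
  obtain \<sigma> where \<sigma>: "bij_betw \<sigma> S {1..m}"
    using finite_same_card_bij[OF finS, of "{1..m}"] S by auto
  have inj: "inj_on \<sigma> S" using \<sigma> by (simp add: bij_betw_def)
  define img where "img X = (\<lambda>e. \<sigma> ` e) ` X" for X :: "nat set set"
  define F' where "F' = (\<lambda>y. img (y \<inter> A)) ` F"
  have AP: "A \<subseteq> pairs_n n" unfolding A_def pairs_n_eq using S by (simp add: pairs_mono)
  have APS: "A \<subseteq> Pow S" by (auto simp: A_def pairs_def)
  have yP: "y \<subseteq> A \<union> Z" if "y \<in> \<G>" for y
    using that code AP by (auto simp: H_code_def A_def Z_def)
  have inj_img: "inj_on img (Pow (Pow S))"
    unfolding img_def by (rule inj_on_image_Pow[OF inj_on_image_Pow[OF inj]])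
  have injF: "inj_on (\<lambda>y. img (y \<inter> A)) F"
  proof (rule inj_onI)
    fix y1 y2 assume y1: "y1 \<in> F" and y2: "y2 \<in> F" and eq: "img (y1 \<inter> A) = img (y2 \<inter> A)"
    have "y1 \<inter> A \<in> Pow (Pow S)" "y2 \<inter> A \<in> Pow (Pow S)" using APS by auto
    then have "y1 \<inter> A = y2 \<inter> A" using inj_onD[OF inj_img eq] by blast
    moreover have "y1 \<inter> Z = y2 \<inter> Z" using y1 y2 by (simp add: F_def)
    moreover have "y1 \<subseteq> A \<union> Z" "y2 \<subseteq> A \<union> Z" using y1 y2 yP by (auto simp: F_def)
    ultimately show "y1 = y2" by blast
  qed
  have cardF: "card F' = card F" unfolding F'_def by (rule card_image[OF injF])
  have sub: "F' \<subseteq> Pow (pairs_n m)"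
  proof
    fix u assume "u \<in> F'"
    then obtain y where "u = img (y \<inter> A)" by (auto simp: F'_def)
    moreover have "\<sigma> ` e \<in> pairs_n m" if "e \<in> A" for e
    proof -
      have e: "e \<subseteq> S" "card e = 2" using that by (auto simp: A_def pairs_def)
      have "\<sigma> ` e \<subseteq> {1..m}" using e \<sigma> by (auto simp: bij_betw_def)
      moreover have "card (\<sigma> ` e) = 2" using e card_image[OF inj_on_subset[OF inj e(1)]] by simp
      ultimately show ?thesis by (simp add: pairs_n_def)
    qed
    ultimately show "u \<in> Pow (pairs_n m)" by (auto simp: img_def)
  qed
  have img_sd: "symdiff (img a) (img b) = img (symdiff a b)" if "a \<subseteq> Pow S" "b \<subseteq> Pow S" for a b
  proof -
    have i: "inj_on (\<lambda>e. \<sigma> ` e) (Pow S)" by (rule inj_on_image_Pow[OF inj])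
    have "img (a - b) = img a - img b" "img (b - a) = img b - img a"
      unfolding img_def using that by (auto intro!: inj_on_image_set_diff[OF i])
    then show ?thesis by (simp add: symdiff_def img_def image_Un)
  qed
  have codeF': "code_on \<H> F'"
  proof (unfold code_on_def, intro ballI notI)
    fix u1 u2 assume u1: "u1 \<in> F'" and u2: "u2 \<in> F'" and ex: "\<exists>K\<in>\<H>. graph_iso (symdiff u1 u2) K"
    obtain y1 where y1: "y1 \<in> F" "u1 = img (y1 \<inter> A)" using u1 by (auto simp: F'_def)
    obtain y2 where y2: "y2 \<in> F" "u2 = img (y2 \<inter> A)" using u2 by (auto simp: F'_def)
    have "symdiff (y1 \<inter> A) (y2 \<inter> A) = symdiff y1 y2"
    proof -
      have "y1 \<inter> Z = y2 \<inter> Z" using y1 y2 by (simp add: F_def)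
      moreover have "y1 \<subseteq> A \<union> Z" "y2 \<subseteq> A \<union> Z" using y1 y2 yP by (auto simp: F_def)
      ultimately show ?thesis by (auto simp: symdiff_def)
    qed
    then have "symdiff u1 u2 = img (symdiff y1 y2)"
      using y1 y2 img_sd[of "y1 \<inter> A" "y2 \<inter> A"] APS by auto
    moreover have "symdiff y1 y2 \<subseteq> Pow S"
      using \<open>symdiff (y1 \<inter> A) (y2 \<inter> A) = symdiff y1 y2\<close> APS by (auto simp: symdiff_def)
    ultimately obtain K where "K \<in> \<H>" "graph_iso (symdiff y1 y2) K"
      using ex relabel_iso[OF inj] unfolding img_def by metis
    moreover have "y1 \<in> \<G>" "y2 \<in> \<G>" using y1 y2 by (auto simp: F_def)
    ultimately show False using code by (auto simp: H_code_alt code_on_def)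
  qed
  have "real (card F') \<le> delta_n m \<H> * 2 ^ card (pairs_n m)"
    by (rule card_code_le) (simp add: H_code_alt sub codeF')
  moreover have "card (pairs_n m) = card (pairs S)"
    using S by (simp add: pairs_n_eq card_pairs)
  ultimately show ?thesis using cardF by (simp add: F_def Z_def)
qed

lemma fiber_bound:
  assumes code: "H_code \<H> n \<G>" and S: "S \<subseteq> {1..n}" "card S = m"
    and R: "R \<subseteq> pairs_n n" "R \<noteq> {}" "R \<inter> pairs S = {}"
  shows "\<bar>\<Sum>y\<in>\<G>. chi R y\<bar> \<le> delta_n m \<H> * 2 ^ card (pairs_n n) - card \<G>"
proof -
  define A where "A = pairs S"
  define Z where "Z = pairs_n n - pairs S"
  define M where "M = delta_n m \<H> * 2 ^ card A"
  define c where "c z = real (card {y\<in>\<G>. y \<inter> Z = z})" for z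
  have finG: "finite \<G>" using code by (auto simp: H_code_def intro: finite_subset)
  have finZ: "finite Z" by (simp add: Z_def)
  have AP: "A \<subseteq> pairs_n n" unfolding A_def pairs_n_eq using S by (simp add: pairs_mono)
  have RZ: "R \<subseteq> Z" using R by (auto simp: Z_def)
  have gZ: "(\<lambda>y. y \<inter> Z) ` \<G> \<subseteq> Pow Z" by auto
  have cM: "c z \<le> M" for z
    unfolding c_def M_def A_def Z_def by (rule fiber_card[OF code S])
  have s1: "(\<Sum>y\<in>\<G>. chi R y) = (\<Sum>z\<in>Pow Z. chi R z * c z)"
  proof -
    have "(\<Sum>y\<in>\<G>. chi R y) = (\<Sum>z\<in>Pow Z. \<Sum>y\<in>{y. y \<in> \<G> \<and> y \<inter> Z = z}. chi R y)"
      by (rule sum.group[OF finG _ gZ, symmetric]) (simp add: finZ)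
    also have "\<dots> = (\<Sum>z\<in>Pow Z. \<Sum>y\<in>{y. y \<in> \<G> \<and> y \<inter> Z = z}. chi R z)"
    proof (intro sum.cong refl)
      fix z y assume "y \<in> {y. y \<in> \<G> \<and> y \<inter> Z = z}"
      then have "R \<inter> y = R \<inter> z" using RZ by auto
      then show "chi R y = chi R z" by (simp add: chi_def)
    qed
    also have "\<dots> = (\<Sum>z\<in>Pow Z. chi R z * c z)" by (simp add: c_def mult.commute)
    finally show ?thesis .
  qed
  have s3: "(\<Sum>z\<in>Pow Z. c z) = card \<G>"
  proof -
    have "(\<Sum>z\<in>Pow Z. \<Sum>y\<in>{y. y \<in> \<G> \<and> y \<inter> Z = z}. (1::real)) = (\<Sum>y\<in>\<G>. 1)"
      by (rule sum.group[OF finG _ gZ]) (simp add: finZ)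
    then show ?thesis by (simp add: c_def)
  qed
  have s4: "(\<Sum>z\<in>Pow Z. chi R z) = 0"
  proof -
    obtain e where e: "e \<in> R" using R by auto
    have "(\<Sum>z\<in>Pow Z. chi z R) = 0"
      by (rule orth0[OF finZ _ _ e]) (use RZ e finZ in \<open>auto intro: finite_subset\<close>)
    then show ?thesis by (simp add: chi_comm)
  qed
  have cardZ: "card A + card Z = card (pairs_n n)"
  proof -
    have "A \<inter> Z = {}" "A \<union> Z = pairs_n n" using AP by (auto simp: A_def Z_def)
    then show ?thesis using card_Un_disjoint[of A Z] finZ finite_subset[OF AP] by simp
  qed
  have MN: "M * 2 ^ card Z = delta_n m \<H> * 2 ^ card (pairs_n n)"
    by (simp add: M_def cardZ[symmetric] power_add)
  have up: "(\<Sum>z\<in>Pow Z. (1 + chi R z) * c z) \<le> (\<Sum>z\<in>Pow Z. (1 + chi R z) * M)"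
    by (rule sum_mono, rule mult_left_mono[OF cM]) (simp add: chi_bnd)
  have lo: "(\<Sum>z\<in>Pow Z. (1 - chi R z) * c z) \<le> (\<Sum>z\<in>Pow Z. (1 - chi R z) * M)"
    by (rule sum_mono, rule mult_left_mono[OF cM]) (simp add: chi_bnd)
  have e1: "(\<Sum>z\<in>Pow Z. (1 + chi R z) * c z) = card \<G> + (\<Sum>z\<in>Pow Z. chi R z * c z)"
    by (simp add: algebra_simps sum.distrib s3)
  have e2: "(\<Sum>z\<in>Pow Z. (1 - chi R z) * c z) = card \<G> - (\<Sum>z\<in>Pow Z. chi R z * c z)"
    by (simp add: algebra_simps sum.distrib s3 sum_subtractf)
  have s4': "(\<Sum>z\<in>Pow Z. M * chi R z) = 0" by (simp add: sum_distrib_left[symmetric] s4)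
  have e3: "(\<Sum>z\<in>Pow Z. (1 + chi R z) * M) = M * 2 ^ card Z"
    by (simp add: algebra_simps sum.distrib s4' card_Pow finZ)
  have e4: "(\<Sum>z\<in>Pow Z. (1 - chi R z) * M) = M * 2 ^ card Z"
    by (simp add: algebra_simps sum_subtractf s4' card_Pow finZ)
  show ?thesis using up lo e1 e2 e3 e4 MN s1 by linarith
qed



lemma no_iso_odd:
  assumes H: "\<forall>K\<in>\<H>. nonempty_loopless_even K" and X: "X \<subseteq> pairs_n n" "odd (card X)" and K: "K \<in> \<H>"
  shows "\<not> graph_iso X K"
proof
  assume iso: "graph_iso X K"
  have "\<forall>e\<in>X. card e = 2" using X by (auto simp: pairs_n_def)
  moreover have "\<forall>e\<in>K. card e = 2" "even (card K)" using H K by (auto simp: nonempty_loopless_even_def)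
  ultimately show False using iso_card[OF iso] X by auto
qed

lemma card_symdiff_single:
  assumes "finite y" shows "even (card (symdiff y {t})) \<longleftrightarrow> \<not> even (card y)"
  using even_card_symdiff[OF assms, of "{t}"] by simp

lemma parity_code:
  assumes H: "\<forall>K\<in>\<H>. nonempty_loopless_even K" and code: "H_code \<H> n \<G>"
    and opt: "Pn n \<G> = delta_n n \<H>" and t: "t \<in> pairs_n n"
  shows "H_code \<H> n ({y\<in>\<G>. even (card y) = p} \<union> (\<lambda>y. symdiff y {t}) ` {y\<in>\<G>. even (card y) = p})"
    and "card ({y\<in>\<G>. even (card y) = p} \<union> (\<lambda>y. symdiff y {t}) ` {y\<in>\<G>. even (card y) = p}) = card \<G>"
proof -
  define P where "P = pairs_n n"
  define Gp where "Gp p = {y\<in>\<G>. even (card y) = p}" for p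
  define G' where "G' p = Gp p \<union> (\<lambda>y. symdiff y {t}) ` Gp p" for p
  have GP: "\<G> \<subseteq> Pow P" using code by (simp add: H_code_def P_def)
  have finP: "finite P" by (simp add: P_def)
  have fin: "finite y" if "y \<in> \<G>" for y using GP that finP finite_subset by blast
  have finG: "finite \<G>" using GP finP by (auto intro: finite_subset)
  have codeG: "code_on \<H> \<G>" using code by (simp add: H_code_alt)
  have code': "H_code \<H> n (G' q)" for q
  proof (unfold H_code_alt, intro conjI)
    show "G' q \<subseteq> Pow (pairs_n n)"
      using GP t by (auto simp: G'_def Gp_def P_def symdiff_def)
    show "code_on \<H> (G' q)"
    proof (unfold code_on_def, intro ballI notI)
      fix u1 u2 assume u1: "u1 \<in> G' q" and u2: "u2 \<in> G' q" and ex: "\<exists>K\<in>\<H>. graph_iso (symdiff u1 u2) K"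
      then obtain K where K: "K \<in> \<H>" "graph_iso (symdiff u1 u2) K" by blast
      have sub: "symdiff u1 u2 \<subseteq> P" using u1 u2 GP t by (auto simp: G'_def Gp_def P_def symdiff_def)
      consider (a) y1 y2 where "y1 \<in> Gp q" "y2 \<in> Gp q" "u1 = y1" "u2 = y2"
        | (b) y1 y2 where "y1 \<in> Gp q" "y2 \<in> Gp q" "u1 = symdiff y1 {t}" "u2 = symdiff y2 {t}"
        | (c) y1 y2 where "y1 \<in> Gp q" "y2 \<in> Gp q" "u1 = y1" "u2 = symdiff y2 {t}"
        | (d) y1 y2 where "y1 \<in> Gp q" "y2 \<in> Gp q" "u1 = symdiff y1 {t}" "u2 = y2"
        using u1 u2 unfolding G'_def by blast
      then show False
      proof cases
        case a then show ?thesis using codeG K by (auto simp: code_on_def Gp_def)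
      next
        case b
        have "symdiff u1 u2 = symdiff y1 y2" using b by (auto simp: symdiff_def)
        then show ?thesis using codeG K b by (auto simp: code_on_def Gp_def)
      next
        case c
        have f: "finite y1" "finite y2" using c fin by (auto simp: Gp_def)
        have "odd (card (symdiff u1 u2))"
          using c f even_card_symdiff[of y1 "symdiff y2 {t}"] card_symdiff_single[of y2 t]
          by (auto simp: Gp_def symdiff_def)
        then show ?thesis using no_iso_odd[OF H _ _ K(1)] sub K(2) by (auto simp: P_def)
      next
        case d
        have f: "finite y1" "finite y2" using d fin by (auto simp: Gp_def)
        have "odd (card (symdiff u1 u2))"
          using d f even_card_symdiff[of "symdiff y1 {t}" y2] card_symdiff_single[of y1 t]
          by (auto simp: Gp_def symdiff_def)
        then show ?thesis using no_iso_odd[OF H _ _ K(1)] sub K(2) by (auto simp: P_def)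
      qed
    qed
  qed
  have cardG': "card (G' q) = 2 * card (Gp q)" for q
  proof -
    have disj: "Gp q \<inter> (\<lambda>y. symdiff y {t}) ` Gp q = {}"
    proof (rule ccontr)
      assume "Gp q \<inter> (\<lambda>y. symdiff y {t}) ` Gp q \<noteq> {}"
      then obtain y y' where "y \<in> Gp q" "y' \<in> Gp q" "y = symdiff y' {t}" by blast
      then show False using card_symdiff_single[of y' t] fin by (auto simp: Gp_def)
    qed
    have inj: "inj_on (\<lambda>y. symdiff y {t}) (Gp q)"
      by (rule inj_onI) (metis symdiff_invol)
    have fG: "finite (Gp q)" using finG by (simp add: Gp_def)
    show ?thesis unfolding G'_def
      using card_Un_disjoint[OF fG finite_imageI[OF fG] disj] card_image[OF inj] by simp
  qed
  have cardG: "real (card \<G>) = delta_n n \<H> * 2 ^ card P"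
    using opt Pn_code[OF GP[unfolded P_def]] by (simp add: P_def divide_eq_eq)
  have le: "2 * card (Gp q) \<le> card \<G>" for q
  proof -
    have "real (card (G' q)) \<le> delta_n n \<H> * 2 ^ card P"
      using card_code_le[OF code'[of q]] by (simp add: P_def)
    then show ?thesis using cardG cardG'[of q] by linarith
  qed
  have sum2: "card (Gp True) + card (Gp False) = card \<G>"
  proof -
    have "Gp True \<union> Gp False = \<G>" "Gp True \<inter> Gp False = {}" by (auto simp: Gp_def)
    moreover have "finite (Gp True)" "finite (Gp False)" using finG by (auto simp: Gp_def)
    ultimately show ?thesis using card_Un_disjoint by metis
  qed
  have "card (G' p) = card \<G>"
    using le[of True] le[of False] sum2 cardG'[of p] by (cases p) auto
  then show "card ({y\<in>\<G>. even (card y) = p} \<union> (\<lambda>y. symdiff y {t}) ` {y\<in>\<G>. even (card y) = p}) = card \<G>"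
    by (simp add: G'_def Gp_def)
  show "H_code \<H> n ({y\<in>\<G>. even (card y) = p} \<union> (\<lambda>y. symdiff y {t}) ` {y\<in>\<G>. even (card y) = p})"
    using code'[of p] by (simp add: G'_def Gp_def)
qed



lemma parity_sum:
  assumes code: "H_code \<H> n \<G>" and t: "t \<in> R" and R: "R \<subseteq> pairs_n n"
  shows "(\<Sum>y\<in>\<G>. chi R y) =
    ((\<Sum>y\<in>{y\<in>\<G>. even (card y) = True} \<union> (\<lambda>y. symdiff y {t}) ` {y\<in>\<G>. even (card y) = True}. chi (pairs_n n - R) y)
   - (\<Sum>y\<in>{y\<in>\<G>. even (card y) = False} \<union> (\<lambda>y. symdiff y {t}) ` {y\<in>\<G>. even (card y) = False}. chi (pairs_n n - R) y)) / 2"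
proof -
  define P where "P = pairs_n n"
  define Q where "Q = P - R"
  define Gp where "Gp p = {y\<in>\<G>. even (card y) = p}" for p
  have GP: "\<G> \<subseteq> Pow P" using code by (simp add: H_code_def P_def)
  have finP: "finite P" by (simp add: P_def)
  have fin: "finite y" if "y \<in> \<G>" for y using GP that finP finite_subset by blast
  have finG: "finite \<G>" using GP finP by (auto intro: finite_subset)
  have fGp: "finite (Gp p)" for p using finG by (simp add: Gp_def)
  have finQ: "finite Q" using finP by (simp add: Q_def)
  have tQ: "t \<notin> Q" using t by (simp add: Q_def)
  have shift: "(\<Sum>y\<in>Gp p \<union> (\<lambda>y. symdiff y {t}) ` Gp p. chi Q y) = 2 * (\<Sum>y\<in>Gp p. chi Q y)" for p
  proof -
    have disj: "Gp p \<inter> (\<lambda>y. symdiff y {t}) ` Gp p = {}"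
    proof (rule ccontr)
      assume "Gp p \<inter> (\<lambda>y. symdiff y {t}) ` Gp p \<noteq> {}"
      then obtain y y' where "y \<in> Gp p" "y' \<in> Gp p" "y = symdiff y' {t}" by blast
      then show False using card_symdiff_single[of y' t] fin by (auto simp: Gp_def)
    qed
    have inj: "inj_on (\<lambda>y. symdiff y {t}) (Gp p)"
      by (rule inj_onI) (metis symdiff_invol)
    have "(\<Sum>y\<in>Gp p \<union> (\<lambda>y. symdiff y {t}) ` Gp p. chi Q y)
        = (\<Sum>y\<in>Gp p. chi Q y) + (\<Sum>y\<in>(\<lambda>y. symdiff y {t}) ` Gp p. chi Q y)"
      by (rule sum.union_disjoint[OF fGp finite_imageI[OF fGp] disj])
    also have "(\<Sum>y\<in>(\<lambda>y. symdiff y {t}) ` Gp p. chi Q y) = (\<Sum>y\<in>Gp p. chi Q (symdiff y {t}))"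
      by (rule sum.reindex[OF inj, unfolded comp_def])
    also have "\<dots> = (\<Sum>y\<in>Gp p. chi Q y)"
    proof (rule sum.cong[OF refl])
      fix y
      have "chi Q {t} = 1" using tQ by (simp add: chi_def)
      then show "chi Q (symdiff y {t}) = chi Q y" by (simp add: chi_symdiff[OF finQ])
    qed
    finally show ?thesis by simp
  qed
  have sgn: "chi Q y = (if p then 1 else -1) * chi R y" if "y \<in> Gp p" for y p
  proof -
    have yP: "y \<subseteq> P" "finite y" using that GP fin by (auto simp: Gp_def)
    have "Q \<inter> y \<union> R \<inter> y = y" "(Q \<inter> y) \<inter> (R \<inter> y) = {}" using yP R by (auto simp: Q_def P_def)
    then have c: "card (Q \<inter> y) + card (R \<inter> y) = card y"
      using card_Un_disjoint[of "Q \<inter> y" "R \<inter> y"] yP by (metis finite_Int inf_commute)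
    have "(-1::real) ^ card (Q \<inter> y) = (-1) ^ card y * (-1) ^ card (R \<inter> y)"
    proof -
      have "(-1::real) ^ card y * (-1) ^ card (R \<inter> y) = (-1) ^ card (Q \<inter> y) * ((-1) ^ card (R \<inter> y))\<^sup>2"
        by (simp add: c[symmetric] power_add power2_eq_square)
      also have "((-1::real) ^ card (R \<inter> y))\<^sup>2 = 1" by (simp add: power_even_eq[symmetric] mult.commute power_mult)
      finally show ?thesis by simp
    qed
    then show ?thesis using that by (simp add: chi_def Gp_def)
  qed
  have split: "(\<Sum>y\<in>\<G>. chi R y) = (\<Sum>y\<in>Gp True. chi R y) + (\<Sum>y\<in>Gp False. chi R y)"
  proof -
    have "Gp True \<union> Gp False = \<G>" "Gp True \<inter> Gp False = {}" by (auto simp: Gp_def)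
    then show ?thesis using sum.union_disjoint[OF fGp fGp, of True False "chi R"] by simp
  qed
  have "(\<Sum>y\<in>Gp True. chi R y) = (\<Sum>y\<in>Gp True. chi Q y)" by (rule sum.cong, simp_all add: sgn)
  moreover have "(\<Sum>y\<in>Gp False. chi R y) = - (\<Sum>y\<in>Gp False. chi Q y)"
    by (simp add: sgn sum_negf)
  ultimately show ?thesis using split shift[of True] shift[of False]
    by (simp add: Gp_def Q_def P_def)
qed

lemma clique_bound:
  assumes H: "\<forall>K\<in>\<H>. nonempty_loopless_even K" and code: "H_code \<H> n \<G>"
    and opt: "Pn n \<G> = delta_n n \<H>" and S: "S \<subseteq> {1..n}" "card S = m"
    and R: "R \<subseteq> pairs_n n" "R \<noteq> {}" "pairs S \<subseteq> R"
  shows "\<bar>\<Sum>y\<in>\<G>. chi R y\<bar> \<le> max 0 (delta_n m \<H> * 2 ^ card (pairs_n n) - card \<G>)"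
proof -
  obtain t where t: "t \<in> R" using R by auto
  have tP: "t \<in> pairs_n n" using t R by auto
  define G' where "G' p = {y\<in>\<G>. even (card y) = p} \<union> (\<lambda>y. symdiff y {t}) ` {y\<in>\<G>. even (card y) = p}" for p
  define Q where "Q = pairs_n n - R"
  have c': "H_code \<H> n (G' p)" "card (G' p) = card \<G>" for p
    using parity_code[OF H code opt tP, of p] by (simp_all add: G'_def)
  have eq: "(\<Sum>y\<in>\<G>. chi R y) = ((\<Sum>y\<in>G' True. chi Q y) - (\<Sum>y\<in>G' False. chi Q y)) / 2"
    using parity_sum[OF code t R(1)] by (simp add: G'_def Q_def)
  show ?thesis
  proof (cases "Q = {}")
    case True
    then have "(\<Sum>y\<in>G' p. chi Q y) = card \<G>" for p using c'(2) by simp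
    then show ?thesis using eq by simp
  next
    case False
    have QP: "Q \<subseteq> pairs_n n" "Q \<inter> pairs S = {}" using R by (auto simp: Q_def)
    have b: "\<bar>\<Sum>y\<in>G' p. chi Q y\<bar> \<le> delta_n m \<H> * 2 ^ card (pairs_n n) - card \<G>" for p
      using fiber_bound[OF c'(1) S QP(1) False QP(2)] c'(2) by simp
    show ?thesis using b[of True] b[of False] unfolding eq by (simp add: abs_le_iff max_def)
  qed
qed



lemma coef_bound:
  assumes H: "\<forall>K\<in>\<H>. nonempty_loopless_even K" and code: "H_code \<H> n \<G>"
    and opt: "Pn n \<G> = delta_n n \<H>"
    and ram: "\<forall>(V::nat set) (E::nat set set). finite V \<and> card V \<ge> r \<longrightarrow>
        (\<exists>S \<subseteq> V. card S = m \<and> clique S E \<or> card S = m \<and> indep S E)"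
    and n: "n \<ge> r" and tau: "delta_n m \<H> - delta_n n \<H> \<le> \<tau>" "0 \<le> \<tau>"
    and RP: "R \<in> Pow (pairs_n n)"
  shows "\<bar>fh (pairs_n n) (\<lambda>y. (if y \<in> \<G> then 1 else 0) - Pn n \<G>) R\<bar> \<le> \<tau> * 2 ^ card (pairs_n n)"
proof -
  define P where "P = pairs_n n"
  define N :: real where "N = 2 ^ card P"
  have finP: "finite P" by (simp add: P_def)
  have GP: "\<G> \<subseteq> Pow P" using code by (simp add: H_code_def P_def)
  have cardG: "real (card \<G>) = delta_n n \<H> * N"
    using opt Pn_code[OF GP[unfolded P_def]] by (simp add: P_def N_def divide_eq_eq)
  have fh_eq: "fh P (\<lambda>y. (if y \<in> \<G> then 1 else 0) - Pn n \<G>) R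
      = (\<Sum>y\<in>\<G>. chi R y) - delta_n n \<H> * (\<Sum>y\<in>Pow P. chi R y)"
  proof -
    have "fh P (\<lambda>y. (if y \<in> \<G> then 1 else 0) - Pn n \<G>) R
        = (\<Sum>y\<in>Pow P. (if y \<in> \<G> then chi R y else 0)) - Pn n \<G> * (\<Sum>y\<in>Pow P. chi R y)"
    proof -
      have "fh P (\<lambda>y. (if y \<in> \<G> then 1 else 0) - Pn n \<G>) R
          = (\<Sum>y\<in>Pow P. (if y \<in> \<G> then chi R y else 0) - Pn n \<G> * chi R y)"
        unfolding fh_def by (rule sum.cong) (auto simp: algebra_simps)
      then show ?thesis by (simp add: sum_subtractf sum_distrib_left)
    qed
    also have "(\<Sum>y\<in>Pow P. (if y \<in> \<G> then chi R y else 0)) = (\<Sum>y\<in>\<G>. chi R y)"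
      using sum.inter_restrict[of "Pow P" "chi R" \<G>] finP GP by (simp add: Int_absorb1)
    finally show ?thesis using opt by simp
  qed
  have NP: "N > 0" by (simp add: N_def)
  show ?thesis
  proof (cases "R = {}")
    case True
    then show ?thesis using fh_eq cardG tau finP NP
      by (simp add: card_Pow N_def P_def)
  next
    case False
    then obtain e where e: "e \<in> R" by auto
    have RsubP: "R \<subseteq> P" using RP by (simp add: P_def)
    have "(\<Sum>y\<in>Pow P. chi y R) = 0"
      by (rule orth0[OF finP _ _ e]) (use RsubP e finP in \<open>auto intro: finite_subset\<close>)
    then have z: "(\<Sum>y\<in>Pow P. chi R y) = 0" by (simp add: chi_comm)
    have "\<exists>S \<subseteq> {1..n}. card S = m \<and> clique S R \<or> card S = m \<and> indep S R"
      using ram n by auto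
    then obtain S where S: "S \<subseteq> {1..n}" "card S = m" and ci: "clique S R \<or> indep S R" by blast
    have b: "\<bar>\<Sum>y\<in>\<G>. chi R y\<bar> \<le> max 0 (delta_n m \<H> * N - card \<G>)"
      using ci
    proof
      assume cl: "clique S R"
      have "pairs S \<subseteq> R"
      proof
        fix x assume "x \<in> pairs S"
        then obtain v w where "x = {v, w}" "v \<noteq> w" "v \<in> S" "w \<in> S"
          by (auto simp: pairs_def card_2_iff)
        then show "x \<in> R" using cl by (auto simp: clique_def)
      qed
      then show ?thesis using clique_bound[OF H code opt S RsubP[unfolded P_def] False] by (simp add: N_def P_def)
    next
      assume ind: "indep S R"
      have "R \<inter> pairs S = {}"
      proof (rule ccontr)
        assume "R \<inter> pairs S \<noteq> {}"
        then obtain x where "x \<in> R" "x \<in> pairs S" by blast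
        then obtain v w where "x = {v, w}" "v \<noteq> w" "v \<in> S" "w \<in> S" "x \<in> R"
          by (auto simp: pairs_def card_2_iff)
        then show False using ind by (auto simp: indep_def)
      qed
      then show ?thesis using fiber_bound[OF code S RsubP[unfolded P_def] False] by (simp add: N_def P_def)
    qed
    have "delta_n m \<H> * N - card \<G> \<le> \<tau> * N"
      using cardG tau NP by (simp add: left_diff_distrib[symmetric] mult_right_mono)
    moreover have "0 \<le> \<tau> * N" using tau NP by simp
    ultimately have mx: "max 0 (delta_n m \<H> * N - card \<G>) \<le> \<tau> * N" by simp
    have "\<bar>fh P (\<lambda>y. (if y \<in> \<G> then 1 else 0) - Pn n \<G>) R\<bar> \<le> \<tau> * N"
      using order_trans[OF b mx] fh_eq z by simp
    then show ?thesis by (simp add: N_def P_def)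
  qed
qed



lemma final_bound:
  assumes H: "\<forall>K\<in>\<H>. nonempty_loopless_even K" and code: "H_code \<H> n \<G>"
    and opt: "Pn n \<G> = delta_n n \<H>"
    and ram: "\<forall>(V::nat set) (E::nat set set). finite V \<and> card V \<ge> r \<longrightarrow>
        (\<exists>S \<subseteq> V. card S = m \<and> clique S E \<or> card S = m \<and> indep S E)"
    and n: "n \<ge> r" and tau: "delta_n m \<H> - delta_n n \<H> \<le> \<epsilon>\<^sup>2" and eps: "\<epsilon> > 0"
  shows "gowers_norm (pairs_n n) 2
             (\<lambda>G. complex_of_real ((if G \<in> \<G> then 1 else 0) - Pn n \<G>)) \<le> \<epsilon>"
proof -
  define P where "P = pairs_n n"
  define N :: real where "N = 2 ^ card P"
  define g where "g = (\<lambda>y. (if y \<in> \<G> then 1 else 0) - Pn n \<G>)"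
  define \<tau> where "\<tau> = \<epsilon>\<^sup>2"
  have finP: "finite P" by (simp add: P_def)
  have NP: "N > 0" by (simp add: N_def)
  have GP: "\<G> \<subseteq> Pow P" using code by (simp add: H_code_def P_def)
  have coef: "\<bar>fh P g R\<bar> \<le> \<tau> * N" if "R \<in> Pow P" for R
    using coef_bound[OF H code opt ram n, of \<tau> R] tau that by (simp add: g_def P_def N_def \<tau>_def)
  have p01: "0 \<le> Pn n \<G>" "Pn n \<G> \<le> 1"
  proof -
    have "card \<G> \<le> card (Pow P)" using GP finP by (simp add: card_mono)
    then have "real (card \<G>) \<le> N" by (simp add: N_def card_Pow finP)
    then show "0 \<le> Pn n \<G>" "Pn n \<G> \<le> 1"
      using Pn_code[OF GP[unfolded P_def]] NP by (simp_all add: N_def P_def divide_le_eq)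
  qed
  have g1: "(g y)\<^sup>2 \<le> 1" for y
  proof -
    have "\<bar>g y\<bar> \<le> 1" using p01 by (simp add: g_def)
    then show ?thesis by (simp add: abs_square_le_1)
  qed
  have "(\<Sum>R\<in>Pow P. (fh P g R)^4) \<le> (\<Sum>R\<in>Pow P. (\<tau> * N)\<^sup>2 * (fh P g R)\<^sup>2)"
  proof (rule sum_mono)
    fix R assume R: "R \<in> Pow P"
    have "(fh P g R)\<^sup>2 \<le> (\<tau> * N)\<^sup>2"
    proof -
      have "\<bar>fh P g R\<bar> \<le> \<bar>\<tau> * N\<bar>" using coef[OF R] by simp
      then show ?thesis by (simp only: abs_le_square_iff)
    qed
    then have "(fh P g R)\<^sup>2 * (fh P g R)\<^sup>2 \<le> (\<tau> * N)\<^sup>2 * (fh P g R)\<^sup>2"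
      by (rule mult_right_mono) simp
    then show "(fh P g R)^4 \<le> (\<tau> * N)\<^sup>2 * (fh P g R)\<^sup>2"
      by (simp add: power4_eq_xxxx power2_eq_square mult.assoc)
  qed
  also have "\<dots> = (\<tau> * N)\<^sup>2 * (N * (\<Sum>y\<in>Pow P. (g y)\<^sup>2))"
    using parseval[OF finP, of g] by (simp add: sum_distrib_left[symmetric] N_def)
  also have "\<dots> \<le> (\<tau> * N)\<^sup>2 * (N * N)"
  proof -
    have "(\<Sum>y\<in>Pow P. (g y)\<^sup>2) \<le> (\<Sum>y\<in>Pow P. 1)" by (rule sum_mono) (rule g1)
    then have "(\<Sum>y\<in>Pow P. (g y)\<^sup>2) \<le> N" by (simp add: N_def card_Pow finP)
    then show ?thesis using NP by (simp add: mult_left_mono)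
  qed
  finally have up: "(\<Sum>R\<in>Pow P. (fh P g R)^4) \<le> \<tau>\<^sup>2 * N ^ 4"
    by (simp add: power2_eq_square power4_eq_xxxx algebra_simps)
  have nn: "0 \<le> (\<Sum>R\<in>Pow P. (fh P g R)^4)" by (rule sum_nonneg) simp
  have "gowers_norm P 2 (\<lambda>G. complex_of_real (g G)) = (\<bar>\<Sum>R\<in>Pow P. (fh P g R)^4\<bar> / N ^ 4) powr (1/4)"
    unfolding N_def by (rule gowers_eq[OF finP])
  also have "\<dots> \<le> (\<tau>\<^sup>2) powr (1/4)"
  proof (rule powr_mono2)
    show "\<bar>\<Sum>R\<in>Pow P. (fh P g R)^4\<bar> / N ^ 4 \<le> \<tau>\<^sup>2"
      using up nn NP by (simp add: divide_le_eq)
  next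
    show "0 \<le> \<bar>\<Sum>R\<in>Pow P. (fh P g R)^4\<bar> / N ^ 4" using NP by simp
  qed simp
  also have "(\<tau>\<^sup>2) powr (1/4) = \<epsilon>"
  proof -
    have a: "\<epsilon> powr 4 = \<epsilon> ^ 4" using powr_realpow[OF eps, of 4] by simp
    have "\<tau>\<^sup>2 = \<epsilon> ^ 4" unfolding \<tau>_def by (simp flip: power_mult)
    then have "\<tau>\<^sup>2 = \<epsilon> powr 4" using a by simp
    then show ?thesis using eps by (simp only: powr_powr) simp
  qed
  finally show ?thesis by (simp add: g_def P_def)
qed

theorem theorem1p12:
  fixes \<H> :: "'a set set set"
  assumes "\<forall>K\<in>\<H>. nonempty_loopless_even K"
  shows "\<forall>\<epsilon>>0. \<exists>n0::nat. n0 > 0 \<and> (\<forall>n\<ge>n0. \<forall>\<G>.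
           H_code \<H> n \<G> \<and> Pn n \<G> = delta_n n \<H> \<longrightarrow>
           gowers_norm (pairs_n n) 2
             (\<lambda>G. complex_of_real ((if G \<in> \<G> then 1 else 0) - Pn n \<G>)) \<le> \<epsilon>)"
proof (intro allI impI)
  fix \<epsilon> :: real assume eps: "\<epsilon> > 0"
  define D where "D n = delta_n n \<H>" for n
  define L where "L = Inf (range D)"
  have bdd: "bdd_below (range D)" by (rule bdd_belowI[of _ 0]) (auto simp: D_def delta_nonneg)
  have "Inf (range D) < L + \<epsilon>\<^sup>2" using eps by (simp add: L_def)
  then obtain m where m: "D m < L + \<epsilon>\<^sup>2" using cInf_lessD[of "range D"] by blast
  have Lle: "L \<le> D n" for n unfolding L_def by (rule cInf_lower[OF rangeI bdd])
  have "\<exists>r\<ge>1. \<forall>(V::nat set) (E::nat set set). finite V \<and> card V \<ge> r \<longrightarrow>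
        (\<exists>S \<subseteq> V. card S = m \<and> clique S E \<or> card S = m \<and> indep S E)"
    by (rule ramsey2)
  then obtain r where r: "r \<ge> 1" and ram: "\<forall>(V::nat set) (E::nat set set). finite V \<and> card V \<ge> r \<longrightarrow>
        (\<exists>S \<subseteq> V. card S = m \<and> clique S E \<or> card S = m \<and> indep S E)" by blast
  show "\<exists>n0::nat. n0 > 0 \<and> (\<forall>n\<ge>n0. \<forall>\<G>.
           H_code \<H> n \<G> \<and> Pn n \<G> = delta_n n \<H> \<longrightarrow>
           gowers_norm (pairs_n n) 2
             (\<lambda>G. complex_of_real ((if G \<in> \<G> then 1 else 0) - Pn n \<G>)) \<le> \<epsilon>)"
  proof (intro exI conjI allI impI)
    show "r > 0" using r by simp
    fix n \<G> assume n: "r \<le> n" and c: "H_code \<H> n \<G> \<and> Pn n \<G> = delta_n n \<H>"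
    have "delta_n m \<H> - delta_n n \<H> \<le> \<epsilon>\<^sup>2" using m Lle[of n] by (simp add: D_def)
    then show "gowers_norm (pairs_n n) 2
             (\<lambda>G. complex_of_real ((if G \<in> \<G> then 1 else 0) - Pn n \<G>)) \<le> \<epsilon>"
      using final_bound[OF assms _ _ ram n _ eps] c by blast
  qed
qed

end
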